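(* Fix an integer $r\ge1$. Then: (1) as $\eta\to0^+$, \[ \xi_r^\ast(\eta)=2\log\left(4^r\eta\sqrt{\Psi^r(0)\prod_{k=1}^{r}\Psi^k(0)}\right)+O(\eta); \] (2) as $\eta\to0^+$, \[ \xi_r^\ast\left(\frac{1}{2^r}-\eta\right)=-2^r\log\left(2^{\,r-1+2^{1-r}}\eta\right)+O(\eta). \]
   Context: $\varphi(\xi)=\frac{\xi}{4}+\log\cosh\frac{\xi}{4}$ for $\xi\in\mathbb{R}$, and $\varphi^r$ is its $r$-fold composition; $\varphi^r$ is strictly increasing and strictly convex on $\mathbb{R}$, and its derivative $(\varphi^r)'$ is a strictly increasing bijection from $\mathbb{R}$ onto $(0,2^{-r})$. For $y\in(0,2^{-r})$, $\xi_r^\ast(y)$ denotes the unique real number with $(\varphi^r)'(\xi_r^\ast(y))=y$. For $X\in[0,\infty)$, $\Psi(X)=\frac{\sqrt{X}+1}{2}$, and $\Psi^k$ denotes the $k$-fold composition of $\Psi$. *)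

theory Defs
  imports "HOL-Analysis.Analysis" "HOL-Library.Landau_Symbols"
begin

definition phi :: "real \<Rightarrow> real" where
  "phi \<xi> = \<xi> / 4 + ln (cosh (\<xi> / 4))"

definition phi_iter :: "nat \<Rightarrow> real \<Rightarrow> real" where
  "phi_iter r = phi ^^ r"

text \<open>xi_star r y: the unique real with (phi^r)'(xi) = y, for y in (0, 2^-r)\<close>
definition xi_star :: "nat \<Rightarrow> real \<Rightarrow> real" where
  "xi_star r y = (THE \<xi>. deriv (phi_iter r) \<xi> = y)"

definition Psi :: "real \<Rightarrow> real" where
  "Psi X = (sqrt X + 1) / 2"

end

theory Submission imports Defs begin

definition hh :: "real \<Rightarrow> real" where "hh Y = sqrt Y / (2 * (1 + sqrt Y))"
definition FF :: "nat \<Rightarrow> real \<Rightarrow> real" where "FF r X = (\<Prod>k<r. hh ((Psi^^k) X))"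

lemma Psi_ge: "X \<ge> 0 \<Longrightarrow> Psi X \<ge> 1/2" by (simp add: Psi_def)
lemma Psi_iter_nonneg: "X \<ge> 0 \<Longrightarrow> (Psi^^k) X \<ge> 0"
  by (induction k) (auto simp: Psi_def)
lemma Psi_iter_ge_half: assumes X: "X \<ge> 0" and k: "k \<ge> 1" shows "(Psi^^k) X \<ge> 1/2"
proof (cases k)
  case 0 then show ?thesis using k by simp
next
  case (Suc n) then show ?thesis using Psi_ge[OF Psi_iter_nonneg[OF X, of n]] by simp
qed
lemma Psi_iter_ge1: "X \<ge> 1 \<Longrightarrow> (Psi^^k) X \<ge> 1"
  by (induction k) (auto simp: Psi_def)
lemma Psi_iter_le1: "X \<ge> 0 \<Longrightarrow> X \<le> 1 \<Longrightarrow> (Psi^^k) X \<le> 1"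
proof (induction k)
  case (Suc k)
  then have "(Psi^^k) X \<le> 1" "(Psi^^k) X \<ge> 0" using Psi_iter_nonneg by auto
  then have "Psi ((Psi^^k) X) \<le> 1" unfolding Psi_def[of "(Psi^^k) X"] by simp
  then show ?case by simp
qed simp

lemma phi_eq: "phi y = ln ((1 + exp (y/2)) / 2)"
proof -
  have c: "cosh (y/4) = (exp (y/4) + exp (-(y/4))) / 2" by (simp add: cosh_def)
  have e1: "exp (y/4) * exp (y/4) = exp (y/2)" by (simp flip: exp_add)
  have e2: "exp (y/4) * exp (-(y/4)) = 1" by (simp flip: exp_add)
  have m: "exp (y/4) * ((exp (y/4) + exp (-(y/4))) / 2) = (1 + exp (y/2)) / 2"
    using e1 e2 by (simp add: distrib_left add_divide_distrib)
  have pc: "cosh (y/4) > 0" by (simp add: c add_pos_pos)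
  have "ln (exp (y/4) * cosh (y/4)) = y/4 + ln (cosh (y/4))"
    using pc by (simp add: ln_mult)
  moreover have m': "exp (y/4) * cosh (y/4) = (1 + exp (y/2)) / 2" using m by (simp only: c)
  ultimately show ?thesis unfolding phi_def by simp
qed

lemma sqrt_exp: "sqrt (exp y) = exp (y/2)"
proof -
  have "exp y = (exp (y/2))^2" by (simp add: power2_eq_square flip: exp_add)
  then show ?thesis by simp
qed

lemma exp_phi: "exp (phi y) = Psi (exp y)"
proof -
  have "(1 + exp (y/2)) / 2 > 0" by (simp add: add_pos_pos)
  then have "exp (phi y) = (1 + exp (y/2)) / 2" by (simp add: phi_eq)
  also have "\<dots> = Psi (exp y)" unfolding Psi_def sqrt_exp by simp
  finally show ?thesis .
qed

lemma exp_phi_iter: "exp ((phi^^k) y) = (Psi^^k) (exp y)"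
  by (induction k) (simp_all add: exp_phi)

lemma phi_deriv: "(phi has_real_derivative hh (exp y)) (at y)"
proof -
  have e: "phi = (\<lambda>y. ln ((1 + exp (y/2)) / 2))" by (rule ext) (simp add: phi_eq)
  have p: "exp (y/2) > 0" by simp
  have g: "((\<lambda>y. (1 + exp (y/2)) / 2) has_real_derivative exp (y/2) / 4) (at y)"
    by (auto intro!: derivative_eq_intros)
  have l: "(ln has_real_derivative inverse ((1 + exp (y/2)) / 2)) (at ((1 + exp (y/2)) / 2))"
    by (rule DERIV_ln) (use p in \<open>simp add: add_pos_pos\<close>)
  have "inverse ((1 + exp (y/2)) / 2) * (exp (y/2) / 4) = hh (exp y)"
    unfolding hh_def sqrt_exp using p by (simp add: field_simps)
  then show ?thesis using DERIV_chain2[OF l g] by (simp add: e)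
qed

lemma iter_deriv: "((phi^^r) has_real_derivative FF r (exp y)) (at y)"
proof (induction r)
  case 0
  then show ?case by (simp add: FF_def id_def)
next
  case (Suc r)
  have "(phi \<circ> (phi^^r) has_real_derivative hh (exp ((phi^^r) y)) * FF r (exp y)) (at y)"
    by (rule DERIV_chain[OF phi_deriv Suc])
  then show ?case by (simp add: FF_def exp_phi_iter mult.commute comp_def)
qed

lemma deriv_eq: "deriv (phi_iter r) \<xi> = FF r (exp \<xi>)"
  unfolding phi_iter_def by (rule DERIV_imp_deriv[OF iter_deriv])

lemma hh_alt: "0 \<le> Y \<Longrightarrow> hh Y = 1/2 - 1/(2*(1+sqrt Y))"
proof -
  assume "0 \<le> Y"
  then have "1 + sqrt Y > 0" by (smt (verit) real_sqrt_ge_zero)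
  then show ?thesis unfolding hh_def by (simp add: field_simps)
qed

lemma hh_strict: "0 \<le> a \<Longrightarrow> a < b \<Longrightarrow> hh a < hh b"
proof -
  assume a: "0 \<le> a" "a < b"
  then have ab: "sqrt a < sqrt b" "sqrt a \<ge> 0" by auto
  have "1/(2*(1+sqrt b)) < 1/(2*(1+sqrt a))"
    by (rule frac_less2) (use ab in \<open>auto simp: add_pos_nonneg\<close>)
  then show ?thesis using hh_alt[of a] hh_alt[of b] a by simp
qed
lemma hh_mono: "0 \<le> a \<Longrightarrow> a \<le> b \<Longrightarrow> hh a \<le> hh b"
proof -
  assume "0 \<le> a" "a \<le> b"
  then consider "a = b" | "a < b" by linarith
  then show ?thesis
  proof cases
    case 2 then show ?thesis using hh_strict[of a b] \<open>0 \<le> a\<close> by simp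
  qed simp
qed
lemma hh_pos: "0 < a \<Longrightarrow> 0 < hh a" unfolding hh_def
  by (intro divide_pos_pos) (auto simp: add_pos_nonneg)
lemma hh_nonneg: "0 \<le> a \<Longrightarrow> 0 \<le> hh a" by (simp add: hh_def)

lemma Psi_mono: "0 \<le> a \<Longrightarrow> a \<le> b \<Longrightarrow> Psi a \<le> Psi b" by (simp add: Psi_def)
lemma Psi_iter_mono: "0 \<le> a \<Longrightarrow> a \<le> b \<Longrightarrow> (Psi^^k) a \<le> (Psi^^k) b"
  by (induction k) (auto intro!: Psi_mono Psi_iter_nonneg)

lemma FF_nonneg: "0 \<le> X \<Longrightarrow> 0 \<le> FF r X"
  unfolding FF_def by (auto intro!: prod_nonneg hh_nonneg Psi_iter_nonneg)
lemma FF_pos: "0 < X \<Longrightarrow> 0 < FF r X"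
  unfolding FF_def
proof (intro prod_pos ballI hh_pos)
  fix k assume X: "0 < X"
  show "0 < (Psi^^k) X"
  proof (cases k)
    case (Suc n)
    have "Psi ((Psi^^n) X) \<ge> 1/2" using Psi_ge Psi_iter_nonneg X by simp
    then show ?thesis using Suc by simp
  qed (use X in simp)
qed

lemma FF_strict: "r \<ge> 1 \<Longrightarrow> 0 \<le> a \<Longrightarrow> a < b \<Longrightarrow> FF r a < FF r b"
proof (induction r)
  case 0 then show ?case by simp
next
  case (Suc r)
  show ?case
  proof (cases "r = 0")
    case True then show ?thesis using Suc by (simp add: FF_def hh_strict)
  next
    case False
    then have r: "r \<ge> 1" by simp
    have 1: "FF r a < FF r b" using Suc r by auto
    have 2: "hh ((Psi^^r) a) \<le> hh ((Psi^^r) b)"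
      using Suc by (intro hh_mono Psi_iter_mono Psi_iter_nonneg) auto
    have 3: "0 < hh ((Psi^^r) a)"
    proof (rule hh_pos)
      have "(Psi^^r) a \<ge> 1/2" using Psi_iter_ge_half[of a r] Suc r by simp
      then show "0 < (Psi^^r) a" by simp
    qed
    have "FF r a * hh ((Psi^^r) a) < FF r b * hh ((Psi^^r) a)" using 1 3 by simp
    also have "\<dots> \<le> FF r b * hh ((Psi^^r) b)"
      using 2 FF_nonneg[of b r] Suc by (auto intro: mult_left_mono)
    finally show ?thesis by (simp add: FF_def)
  qed
qed

lemma xi_star_eq: "r \<ge> 1 \<Longrightarrow> X > 0 \<Longrightarrow> xi_star r (FF r X) = ln X"
  unfolding xi_star_def deriv_eq
proof (rule the_equality)
  assume "r \<ge> 1" "X > 0"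
  then show "FF r (exp (ln X)) = FF r X" by simp
  fix \<xi> assume e: "FF r (exp \<xi>) = FF r X"
  have "exp \<xi> = X"
  proof (rule ccontr)
    assume "exp \<xi> \<noteq> X"
    then consider "exp \<xi> < X" | "X < exp \<xi>" by linarith
    then show False
      using FF_strict[OF \<open>r\<ge>1\<close>, of "exp \<xi>" X] FF_strict[OF \<open>r\<ge>1\<close>, of X "exp \<xi>"] e \<open>X>0\<close>
      by (cases) auto
  qed
  then show "\<xi> = ln X" by auto
qed

lemma FF_zero: "r \<ge> 1 \<Longrightarrow> FF r 0 = 0"
  unfolding FF_def by (rule prod_zero) (auto simp: hh_def intro!: bexI[of _ 0])

lemma Psi_iter_cont: "continuous_on UNIV (Psi^^k)"
proof (induction k)
  case 0 then show ?case by (simp add: id_def)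
next
  case (Suc k)
  have "continuous_on UNIV Psi" unfolding Psi_def by (intro continuous_intros) auto
  then show ?case using Suc by (simp add: continuous_on_compose2[of UNIV Psi])
qed

lemma FF_cont: "continuous_on {0..} (FF r)"
proof -
  have c: "continuous_on {0..} (Psi^^k)" for k
    using Psi_iter_cont continuous_on_subset by blast
  have n: "\<forall>X\<in>{0..}. 2 * (1 + sqrt ((Psi^^k) X)) \<noteq> 0" for k
    using Psi_iter_nonneg by (smt (verit) atLeast_iff real_sqrt_ge_zero)
  have "continuous_on {0..} (\<lambda>X. \<Prod>k<r. sqrt ((Psi^^k) X) / (2 * (1 + sqrt ((Psi^^k) X))))"
    by (intro continuous_on_prod continuous_on_divide continuous_intros c n)
  then show ?thesis unfolding FF_def hh_def .
qed


definition GG :: "nat \<Rightarrow> real \<Rightarrow> real" where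
  "GG r X = sqrt ((Psi^^r) X * (\<Prod>k\<in>{1..r}. (Psi^^k) X))"

lemma Psi_pos_iter: "X \<ge> 0 \<Longrightarrow> (Psi^^Suc k) X > 0"
proof -
  assume X: "X \<ge> 0"
  have "Psi ((Psi^^k) X) \<ge> 1/2" using Psi_ge Psi_iter_nonneg X by simp
  then show ?thesis by simp
qed

lemma sqrt_identity: "X \<ge> 0 \<Longrightarrow> sqrt X = 4^r * FF r X * GG r X"
proof (induction r)
  case 0 then show ?case by (simp add: FF_def GG_def)
next
  case (Suc r)
  define Y where "Y = (Psi^^r) X"
  define P where "P = (\<Prod>k\<in>{1..r}. (Psi^^k) X)"
  have Y0: "Y \<ge> 0" unfolding Y_def using Suc Psi_iter_nonneg by simp
  have P0: "P \<ge> 0" unfolding P_def using Suc Psi_iter_nonneg by (intro prod_nonneg) auto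
  have Yp: "Psi Y > 0" using Psi_ge[OF Y0] by simp
  have G1: "GG (Suc r) X = Psi Y * sqrt P"
  proof -
    have "GG (Suc r) X = sqrt (Psi Y * (P * Psi Y))"
      unfolding GG_def P_def Y_def by (simp add: prod.cl_ivl_Suc)
    also have "\<dots> = sqrt (Psi Y * Psi Y) * sqrt P" by (simp add: real_sqrt_mult ac_simps)
    also have "sqrt (Psi Y * Psi Y) = Psi Y" using Yp by simp
    finally show ?thesis .
  qed
  have G0: "GG r X = sqrt Y * sqrt P" unfolding GG_def P_def Y_def by (simp add: real_sqrt_mult)
  have "4 * Psi Y = 2 * (1 + sqrt Y)" by (simp add: Psi_def)
  then have "hh Y = sqrt Y / (4 * Psi Y)" unfolding hh_def by simp
  then have F1: "FF (Suc r) X = FF r X * (sqrt Y / (4 * Psi Y))"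
    unfolding FF_def Y_def by simp
  have "4^(Suc r) * FF (Suc r) X * GG (Suc r) X = 4^r * FF r X * (sqrt Y * sqrt P) * (Psi Y / Psi Y)"
    unfolding F1 G1 by (simp add: field_simps)
  also have "\<dots> = 4^r * FF r X * GG r X" using Yp G0 by simp
  finally show ?case using Suc by simp
qed

lemma sqrt_diff: "1/4 \<le> (b::real) \<Longrightarrow> b \<le> a \<Longrightarrow> 0 \<le> sqrt a - sqrt b \<and> sqrt a - sqrt b \<le> a - b"
proof -
  assume b: "1/4 \<le> b" and ab: "b \<le> a"
  have sb: "sqrt b \<ge> 1/2" by (rule real_le_rsqrt) (use b in \<open>simp add: power2_eq_square\<close>)
  have sab: "sqrt b \<le> sqrt a" using ab by simp
  have "a - b = (sqrt a - sqrt b) * (sqrt a + sqrt b)"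
    using b ab by (simp add: algebra_simps)
  moreover have "(sqrt a - sqrt b) * 1 \<le> (sqrt a - sqrt b) * (sqrt a + sqrt b)"
  proof (rule mult_left_mono)
    show "1 \<le> sqrt a + sqrt b" using sb sab by linarith
  qed (use sab in simp)
  ultimately show ?thesis using sab by simp
qed

lemma ln_diff: "1/2 \<le> (b::real) \<Longrightarrow> b \<le> a \<Longrightarrow> 0 \<le> ln a - ln b \<and> ln a - ln b \<le> 2 * (a - b)"
proof -
  assume b: "1/2 \<le> b" and ab: "b \<le> a"
  have "ln a - ln b = ln (a / b)" using b ab by (simp add: ln_div)
  also have "\<dots> \<le> a / b - 1" using b ab by (intro ln_le_minus_one) simp
  also have "\<dots> = (a - b) / b" using b by (simp add: field_simps)
  also have "\<dots> \<le> (a - b) / (1/2)" using b ab by (intro divide_left_mono) auto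
  finally show ?thesis using b ab by simp
qed

lemma diff_bound: "X \<ge> 0 \<Longrightarrow> k \<ge> 1 \<Longrightarrow>
   0 \<le> (Psi^^k) X - (Psi^^k) 0 \<and> (Psi^^k) X - (Psi^^k) 0 \<le> sqrt X / 2"
proof (induction k)
  case 0 then show ?case by simp
next
  case (Suc k)
  show ?case
  proof (cases "k = 0")
    case True
    have "Psi X - Psi 0 = sqrt X / 2" unfolding Psi_def by (simp add: field_simps)
    then have e: "(Psi^^Suc k) X - (Psi^^Suc k) 0 = sqrt X / 2" using True by simp
    have "sqrt X \<ge> 0" using Suc.prems by simp
    then show ?thesis unfolding e by simp
  next
    case False
    define a where "a = (Psi^^k) X"
    define b where "b = (Psi^^k) 0"
    have ih: "0 \<le> a - b" "a - b \<le> sqrt X / 2" using Suc False unfolding a_def b_def by auto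
    have b: "b \<ge> 1/2" unfolding b_def using Psi_iter_ge_half[of 0 k] False by simp
    have sd: "0 \<le> sqrt a - sqrt b \<and> sqrt a - sqrt b \<le> a - b" using ih b by (intro sqrt_diff) auto
    have e2: "(Psi^^Suc k) X - (Psi^^Suc k) 0 = (sqrt a - sqrt b) / 2"
      unfolding a_def b_def by (simp add: Psi_def field_simps)
    from sd have s1: "0 \<le> sqrt a - sqrt b" and s2: "sqrt a - sqrt b \<le> a - b" by blast+
    have "sqrt X \<ge> 0" using Suc.prems by simp
    have t2: "(sqrt a - sqrt b) / 2 \<le> sqrt X / 2"
    proof -
      have gen: "\<And>s t u::real. 0 \<le> u \<Longrightarrow> s \<le> t \<Longrightarrow> t \<le> u/2 \<Longrightarrow> s/2 \<le> u/2" by linarith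
      show ?thesis by (rule gen[OF \<open>sqrt X \<ge> 0\<close> s2 ih(2)])
    qed
    have t1: "0 \<le> (sqrt a - sqrt b) / 2" using s1 by simp
    show ?thesis unfolding e2 using t1 t2 by blast
  qed
qed

lemma GG_pos: "X \<ge> 0 \<Longrightarrow> r \<ge> 1 \<Longrightarrow> GG r X > 0"
proof -
  assume X: "X \<ge> 0" and r: "r \<ge> 1"
  have "(Psi^^r) X > 0" using Psi_iter_ge_half[OF X r] by simp
  moreover have "(\<Prod>k\<in>{1..r}. (Psi^^k) X) > 0"
  proof (intro prod_pos ballI)
    fix k assume "k \<in> {1..r}"
    then show "(Psi^^k) X > 0" using Psi_iter_ge_half[OF X, of k] by simp
  qed
  ultimately show ?thesis unfolding GG_def by simp
qed

lemma GG_le1: "X \<ge> 0 \<Longrightarrow> X \<le> 1 \<Longrightarrow> GG r X \<le> 1"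
proof -
  assume X: "X \<ge> 0" "X \<le> 1"
  have "(\<Prod>k\<in>{1..r}. (Psi^^k) X) \<le> 1"
    using X by (intro prod_le_1) (auto intro: Psi_iter_nonneg Psi_iter_le1)
  moreover have "(\<Prod>k\<in>{1..r}. (Psi^^k) X) \<ge> 0"
    using X by (intro prod_nonneg) (auto intro: Psi_iter_nonneg)
  moreover have "(Psi^^r) X \<le> 1" "(Psi^^r) X \<ge> 0" using X Psi_iter_le1 Psi_iter_nonneg by auto
  ultimately have "(Psi^^r) X * (\<Prod>k\<in>{1..r}. (Psi^^k) X) \<le> 1"
    by (metis mult_le_one)
  then show ?thesis unfolding GG_def by simp
qed


lemma term_bound:
  assumes X: "X \<ge> 0" and k: "k \<ge> 1"
  shows "0 \<le> ln ((Psi^^k) X) - ln ((Psi^^k) 0) \<and> ln ((Psi^^k) X) - ln ((Psi^^k) 0) \<le> sqrt X"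
proof -
  have d: "0 \<le> (Psi^^k) X - (Psi^^k) 0 \<and> (Psi^^k) X - (Psi^^k) 0 \<le> sqrt X / 2"
    by (rule diff_bound[OF X k])
  have b: "(Psi^^k) 0 \<ge> 1/2" using Psi_iter_ge_half[of 0 k] k by simp
  have l: "0 \<le> ln ((Psi^^k) X) - ln ((Psi^^k) 0) \<and> ln ((Psi^^k) X) - ln ((Psi^^k) 0) \<le> 2 * ((Psi^^k) X - (Psi^^k) 0)"
    using d b by (intro ln_diff) auto
  define u where "u = sqrt X"
  define t where "t = ln ((Psi^^k) X) - ln ((Psi^^k) 0)"
  define v where "v = (Psi^^k) X - (Psi^^k) 0"
  have "0 \<le> t" "t \<le> 2 * v" "v \<le> u / 2" using l d unfolding t_def v_def u_def by auto
  then have "0 \<le> t \<and> t \<le> u" by linarith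
  then show ?thesis unfolding t_def u_def .
qed

lemma ln_GG: "X \<ge> 0 \<Longrightarrow> r \<ge> 1 \<Longrightarrow>
   2 * ln (GG r X) = ln ((Psi^^r) X) + (\<Sum>k\<in>{1..r}. ln ((Psi^^k) X))"
proof -
  assume X: "X \<ge> 0" and r: "r \<ge> 1"
  have pk: "(Psi^^k) X > 0" if "k \<ge> 1" for k using Psi_iter_ge_half[OF X that] by simp
  have pp: "(\<Prod>k\<in>{1..r}. (Psi^^k) X) > 0" by (rule prod_pos) (use pk in auto)
  have "2 * ln (GG r X) = ln ((Psi^^r) X * (\<Prod>k\<in>{1..r}. (Psi^^k) X))"
    unfolding GG_def using pk[OF r] pp by (simp add: ln_sqrt)
  also have "\<dots> = ln ((Psi^^r) X) + ln (\<Prod>k\<in>{1..r}. (Psi^^k) X)"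
    using pk[OF r] pp by (rule ln_mult_pos)
  also have "ln (\<Prod>k\<in>{1..r}. (Psi^^k) X) = (\<Sum>k\<in>{1..r}. ln ((Psi^^k) X))"
  proof (rule ln_prod)
    fix i assume "i \<in> {1..r}"
    then show "(Psi^^i) X \<noteq> 0" using pk[of i] by simp
  qed simp
  finally show ?thesis .
qed

lemma part1_bound:
  assumes r: "r \<ge> 1" and X: "0 < X" "X \<le> 1"
  shows "\<bar>ln X - 2 * ln (4^r * FF r X * GG r 0)\<bar> \<le> (real r + 1) * 4^r * FF r X"
proof -
  define \<eta> where "\<eta> = FF r X"
  have \<eta>: "\<eta> > 0" unfolding \<eta>_def using FF_pos X by simp
  have GX: "GG r X > 0" "GG r X \<le> 1" using GG_pos GG_le1 X r by auto
  have G0: "GG r 0 > 0" using GG_pos r by simp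
  have sq: "sqrt X = 4^r * \<eta> * GG r X" unfolding \<eta>_def using sqrt_identity X by simp
  have "ln X = 2 * ln (sqrt X)" using X by (simp add: ln_sqrt)
  also have "\<dots> = 2 * ln (4^r * \<eta>) + 2 * ln (GG r X)" unfolding sq using \<eta> GX by (simp add: ln_mult)
  finally have lX: "ln X = 2 * ln (4^r * \<eta>) + 2 * ln (GG r X)" .
  have l0: "ln (4^r * \<eta> * GG r 0) = ln (4^r * \<eta>) + ln (GG r 0)" using \<eta> G0 by (simp add: ln_mult)
  define D where "D = ln ((Psi^^r) X) - ln ((Psi^^r) 0) + (\<Sum>k\<in>{1..r}. ln ((Psi^^k) X) - ln ((Psi^^k) 0))"
  have eq: "ln X - 2 * ln (4^r * \<eta> * GG r 0) = D"
    unfolding lX l0 D_def using ln_GG[of X r] ln_GG[of 0 r] X r by (simp add: sum_subtractf algebra_simps)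
  define u where "u = sqrt X"
  have tb: "0 \<le> ln ((Psi^^k) X) - ln ((Psi^^k) 0) \<and> ln ((Psi^^k) X) - ln ((Psi^^k) 0) \<le> u" if "k \<ge> 1" for k
    unfolding u_def using term_bound[of X k] X that by simp
  have s1: "(\<Sum>k\<in>{1..r}. ln ((Psi^^k) X) - ln ((Psi^^k) 0)) \<le> real r * u"
    using sum_bounded_above[of "{1..r}" "\<lambda>k. ln ((Psi^^k) X) - ln ((Psi^^k) 0)" u] tb by auto
  have s0: "(\<Sum>k\<in>{1..r}. ln ((Psi^^k) X) - ln ((Psi^^k) 0)) \<ge> 0"
    using tb by (intro sum_nonneg) auto
  have t0: "0 \<le> ln ((Psi^^r) X) - ln ((Psi^^r) 0)" "ln ((Psi^^r) X) - ln ((Psi^^r) 0) \<le> u"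
    using tb[OF r] by auto
  have D: "0 \<le> D" "D \<le> (real r + 1) * u" unfolding D_def using s1 s0 t0 by (auto simp: algebra_simps)
  have u: "u \<le> 4^r * \<eta>" unfolding u_def sq using GX \<eta> by (simp add: mult_left_le)
  have f: "(real r + 1) * u \<le> (real r + 1) * 4^r * \<eta>"
    using mult_left_mono[OF u, of "real r + 1"] by (simp add: mult.assoc)
  have "\<bar>ln X - 2 * ln (4^r * \<eta> * GG r 0)\<bar> \<le> (real r + 1) * 4^r * \<eta>"
    unfolding abs_le_iff eq using D f by linarith
  then show ?thesis unfolding \<eta>_def .
qed


lemma part1:
  assumes r: "r \<ge> 1"
  shows "(\<lambda>\<eta>. xi_star r \<eta>
            - 2 * ln (4 ^ r * \<eta> * sqrt ((Psi ^^ r) 0 * (\<Prod>k\<in>{1..r}. (Psi ^^ k) 0))))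
           \<in> O[at_right (0::real)](\<lambda>\<eta>. \<eta>)"
proof (rule bigoI)
  have F1: "FF r 1 > 0" using FF_pos by simp
  show "\<forall>\<^sub>F \<eta> in at_right 0. norm (xi_star r \<eta>
            - 2 * ln (4 ^ r * \<eta> * sqrt ((Psi ^^ r) 0 * (\<Prod>k\<in>{1..r}. (Psi ^^ k) 0))))
          \<le> ((real r + 1) * 4^r) * norm \<eta>"
    using eventually_at_right_real[OF F1]
  proof (rule eventually_mono)
    fix \<eta> :: real assume "\<eta> \<in> {0<..<FF r 1}"
    then have \<eta>: "0 < \<eta>" "\<eta> < FF r 1" by auto
    have c: "continuous_on {0..1} (FF r)"
      by (rule continuous_on_subset[OF FF_cont]) auto
    have "\<exists>x\<ge>0. x \<le> 1 \<and> FF r x = \<eta>"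
    proof (rule IVT'[OF _ _ _ c])
      show "FF r 0 \<le> \<eta>" using FF_zero[OF r] \<eta> by simp
      show "\<eta> \<le> FF r 1" using \<eta> by simp
    qed simp
    then obtain X where X: "0 \<le> X" "X \<le> 1" "FF r X = \<eta>" by blast
    have "X \<noteq> 0" using X \<eta> FF_zero[OF r] by auto
    then have Xp: "X > 0" using X by simp
    have xi: "xi_star r \<eta> = ln X" using xi_star_eq[OF r Xp] X by simp
    have b: "\<bar>ln X - 2 * ln (4^r * FF r X * GG r 0)\<bar> \<le> (real r + 1) * 4^r * FF r X"
      by (rule part1_bound[OF r Xp X(2)])
    show "norm (xi_star r \<eta>
            - 2 * ln (4 ^ r * \<eta> * sqrt ((Psi ^^ r) 0 * (\<Prod>k\<in>{1..r}. (Psi ^^ k) 0))))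
          \<le> ((real r + 1) * 4^r) * norm \<eta>"
      using b \<eta> unfolding xi X(3) GG_def by simp
  qed
qed


lemma two_pow_FF: "X \<ge> 0 \<Longrightarrow> 2^r * FF r X = (\<Prod>k<r. 1 - 1/(1 + sqrt ((Psi^^k) X)))"
proof (induction r)
  case 0 then show ?case by (simp add: FF_def)
next
  case (Suc r)
  define Y where "Y = (Psi^^r) X"
  have "Y \<ge> 0" unfolding Y_def using Suc Psi_iter_nonneg by simp
  then have p: "1 + sqrt Y > 0" by (smt (verit) real_sqrt_ge_zero)
  have h: "2 * hh Y = 1 - 1/(1 + sqrt Y)" unfolding hh_def using p by (simp add: field_simps)
  have "2^(Suc r) * FF (Suc r) X = (2^r * FF r X) * (2 * hh Y)"
    unfolding FF_def Y_def by simp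
  also have "\<dots> = (\<Prod>k<Suc r. 1 - 1/(1 + sqrt ((Psi^^k) X)))"
    using Suc h unfolding Y_def by simp
  finally show ?case .
qed

lemma Psi_step_le: "Y \<ge> 1 \<Longrightarrow> Psi Y \<le> sqrt Y \<and> sqrt Y \<le> Y"
proof -
  assume Y: "Y \<ge> 1"
  define t where "t = sqrt Y"
  have t1: "t \<ge> 1" unfolding t_def using Y by simp
  have tY: "Y = t * t" unfolding t_def using Y by simp
  have "(t + 1) / 2 \<le> t" using t1 by simp
  moreover have "t \<le> t * t" using t1 by (simp add: mult_le_cancel_left1)
  ultimately show ?thesis unfolding Psi_def t_def[symmetric] using tY by simp
qed

lemma Psi_iter_antimono: "X \<ge> 1 \<Longrightarrow> j \<le> k \<Longrightarrow> (Psi^^k) X \<le> (Psi^^j) X"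
proof (induction k)
  case 0 then show ?case by simp
next
  case (Suc k)
  show ?case
  proof (cases "j = Suc k")
    case False
    then have "j \<le> k" using Suc by simp
    then have a: "(Psi^^k) X \<le> (Psi^^j) X" using Suc by simp
    have b: "Psi ((Psi^^k) X) \<le> (Psi^^k) X"
      using Psi_step_le[OF Psi_iter_ge1[OF Suc.prems(1)]] by (meson order_trans)
    show ?thesis using a b by simp
  qed simp
qed

lemma weier:
  fixes a :: "nat \<Rightarrow> real"
  shows "(\<And>k. k < n \<Longrightarrow> 0 \<le> a k \<and> a k \<le> 1) \<Longrightarrow>
    1 - (\<Sum>k<n. a k) \<le> (\<Prod>k<n. 1 - a k) \<and> (\<Prod>k<n. 1 - a k) \<le> 1 \<and> 0 \<le> (\<Prod>k<n. 1 - a k)"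
proof (induction n)
  case 0 then show ?case by simp
next
  case (Suc n)
  define p where "p = (\<Prod>k<n. 1 - a k)"
  define S where "S = (\<Sum>k<n. a k)"
  define x where "x = a n"
  have ih: "1 - S \<le> p" "p \<le> 1" "0 \<le> p" using Suc unfolding p_def S_def by auto
  have x: "0 \<le> x" "x \<le> 1" using Suc.prems[of n] unfolding x_def by auto
  have px: "p * x \<le> x" using ih x by (simp add: mult_le_one mult_left_le_one_le)
  have 1: "1 - (S + x) \<le> p * (1 - x)" using ih px by (simp add: algebra_simps)
  have 2: "p * (1 - x) \<le> 1" using ih x by (simp add: mult_le_one)
  have 3: "0 \<le> p * (1 - x)" using ih x by simp
  show ?case using 1 2 3 unfolding p_def S_def x_def by simp
qed

lemma ln_Psi: "Y \<ge> 1 \<Longrightarrow> ln (Psi Y) = ln Y / 2 + ln (1 + 1 / sqrt Y) - ln 2"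
proof -
  assume Y: "Y \<ge> 1"
  define t where "t = sqrt Y"
  have t1: "t \<ge> 1" unfolding t_def using Y by simp
  have ps: "Psi Y = t * (1 + 1/t) / 2" unfolding Psi_def t_def[symmetric] using t1 by (simp add: field_simps)
  have lq: "ln (t * (1 + 1/t) / 2) = ln t + ln (1 + 1/t) - ln 2"
  proof -
    have p1: "t > 0" "1 + 1/t > 0" using t1 by (auto simp: add_pos_pos)
    have "ln (t * (1 + 1/t) / 2) = ln (t * (1 + 1/t)) - ln 2"
      using p1 by (intro ln_divide_pos) auto
    also have "ln (t * (1 + 1/t)) = ln t + ln (1 + 1/t)" using p1 by (rule ln_mult_pos)
    finally show ?thesis .
  qed
  have "ln (Psi Y) = ln t + ln (1 + 1/t) - ln 2" unfolding ps by (rule lq)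
  moreover have "ln t = ln Y / 2" unfolding t_def using Y by (simp add: ln_sqrt)
  ultimately show ?thesis unfolding t_def by simp
qed

lemma log_rec:
  assumes X: "X \<ge> 1"
  shows "2^n * ln ((Psi^^n) X) = ln X - (2^(n+1) - 2) * ln 2
           + (\<Sum>k<n. 2^(k+1) * ln (1 + 1/sqrt ((Psi^^k) X)))"
proof (induction n)
  case 0 then show ?case by simp
next
  case (Suc n)
  have Y: "(Psi^^n) X \<ge> 1" using Psi_iter_ge1[OF X] .
  have e: "(Psi^^Suc n) X = Psi ((Psi^^n) X)" by simp
  have "2^(Suc n) * ln ((Psi^^Suc n) X) = 2^n * ln ((Psi^^n) X)
        + 2^(n+1) * ln (1 + 1 / sqrt ((Psi^^n) X)) - 2^(n+1) * ln 2"
    unfolding e ln_Psi[OF Y] by (simp add: algebra_simps)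
  also have "\<dots> = ln X - (2^(Suc n+1) - 2) * ln 2
           + (\<Sum>k<Suc n. 2^(k+1) * ln (1 + 1/sqrt ((Psi^^k) X)))"
    unfolding Suc by (simp add: algebra_simps)
  finally show ?case .
qed

lemma alg:
  fixes sv pp mm :: real
  assumes sv: "sv \<ge> 1" and pp: "0 \<le> pp" "pp \<le> 1" and PM: "1 - pp \<le> mm / (sv* sv)" and mm: "mm \<ge> 0"
  defines "ee \<equiv> 1 - pp*(1 - 1/(1+sv))"
  shows "ee \<ge> 1/(2* sv)" and "sv * ee \<ge> sv/(1+sv)" and "sv * ee \<le> 1 + mm/sv" and "ee \<le> (mm+1)/sv"
proof -
  define q where "q = 1/(1+sv)"
  have q: "0 < q" "q \<le> 1" "q \<ge> 1/(2* sv)" "sv * q \<le> 1" "sv * q = sv/(1+sv)" "q \<le> 1/sv"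
    unfolding q_def using sv by (auto simp: field_simps)
  have Eq: "ee = (1 - pp) + pp * q" unfolding ee_def q_def by (simp add: algebra_simps)
  have Eq2: "ee - q = (1 - pp) * (1 - q)" unfolding Eq by (simp add: algebra_simps)
  have Eq3: "ee \<ge> q" using Eq2 pp q by (smt (verit) mult_nonneg_nonneg)
  then show "ee \<ge> 1/(2* sv)" using q by linarith
  have "sv * ee - sv * q = sv * (ee - q)" by (simp add: algebra_simps)
  then have "sv * ee \<ge> sv * q" using Eq3 sv by (smt (verit) mult_nonneg_nonneg)
  then show "sv * ee \<ge> sv/(1+sv)" using q by simp
  have sP: "sv * (1 - pp) \<le> mm / sv"
  proof -
    have "sv * (1 - pp) \<le> sv * (mm / (sv* sv))" using PM sv by (intro mult_left_mono) auto
    also have "\<dots> = mm / sv" using sv by (simp add: field_simps)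
    finally show ?thesis .
  qed
  have "0 \<le> sv * q" using sv q by simp
  then have "pp * (sv * q) \<le> 1" by (rule mult_le_one[OF pp(2) _ q(4)])
  moreover have "sv * ee = sv * (1 - pp) + pp * (sv * q)" unfolding Eq by (simp add: algebra_simps)
  ultimately show "sv * ee \<le> 1 + mm/sv" using sP by linarith
  have "1 - pp \<le> mm / sv"
  proof -
    have "mm / (sv* sv) \<le> mm / sv" using sv mm by (intro divide_left_mono) (auto simp: mult_le_cancel_left1)
    then show ?thesis using PM by linarith
  qed
  moreover have "pp * q \<le> q" using pp q by (simp add: mult_left_le_one_le)
  ultimately have "ee \<le> mm/sv + 1/sv" using Eq q by linarith
  then show "ee \<le> (mm+1)/sv" by (simp add: add_divide_distrib)
qed

lemma fin:
  fixes A T u \<eta> p m :: real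
  assumes A: "\<bar>A\<bar> \<le> (m+1)*u" and T: "0 \<le> T" "T \<le> m*p*u" and u: "u \<le> 4*p*\<eta>" "0 \<le> u"
    and p: "p > 0" and m: "m \<ge> 0" and \<eta>: "\<eta> > 0"
  shows "\<bar>2*p*A - T\<bar> \<le> 4*(4*(p*p))*(m+1)*\<eta>"
proof -
  have "\<bar>2*p*A\<bar> = 2*p*\<bar>A\<bar>" using p by (simp add: abs_mult)
  also have "\<dots> \<le> 2*p*((m+1)*u)" using A p by (intro mult_left_mono) auto
  finally have 1: "\<bar>2*p*A\<bar> \<le> 2*p*((m+1)*u)" .
  have "\<bar>2*p*A - T\<bar> \<le> \<bar>2*p*A\<bar> + T" using T by linarith
  also have "\<dots> \<le> 2*p*((m+1)*u) + m*p*u" using 1 T by linarith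
  also have "\<dots> = (p*(3*m+2))*u" by (simp add: algebra_simps)
  also have "\<dots> \<le> (p*(3*m+2))*(4*p*\<eta>)" using u p m by (intro mult_left_mono) auto
  also have "\<dots> = (3*m+2)*(4*(p*p)*\<eta>)" by (simp add: algebra_simps)
  also have "\<dots> \<le> (4*(m+1))*(4*(p*p)*\<eta>)" using p \<eta> m by (intro mult_right_mono) auto
  also have "\<dots> = 4*(4*(p*p))*(m+1)*\<eta>" by (simp add: algebra_simps)
  finally show ?thesis .
qed


lemma ident:
  fixes p lX L l2 T m le :: real
  assumes "p > 0" "lX = p * L + (2 * p - 2) * l2 - T"
  shows "lX + 2 * p * ((m + 1/p) * l2 + le) = 2 * p * (L/2 + (m+1) * l2 + le) - T"
  unfolding assms(2) using assms(1) by (simp add: field_simps)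

lemma part2_bound:
  fixes m :: nat and X :: real
  assumes X: "X \<ge> 1"
  defines "\<eta> \<equiv> 1/2^(Suc m) - FF (Suc m) X"
  shows "\<eta> > 0"
    and "2^(Suc m) * \<eta> \<le> (real m + 1) / sqrt ((Psi^^m) X)"
    and "\<bar>ln X + 2^(Suc m) * ln (2 powr (real (Suc m) - 1 + 2 powr (1 - real (Suc m))) * \<eta>)\<bar>
           \<le> 4 * 4^(Suc m) * real (Suc m) * \<eta>"
proof -
  define Y where "Y = (\<lambda>k. (Psi^^k) X)"
  define s where "s = sqrt (Y m)"
  define e where "e = (\<lambda>k. 1/(1 + sqrt (Y k)))"
  define P where "P = (\<Prod>k<m. 1 - e k)"
  have Y1: "Y k \<ge> 1" for k unfolding Y_def using Psi_iter_ge1[OF X] .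
  have s1: "s \<ge> 1" unfolding s_def using Y1[of m] by simp
  have sY: "Y m = s * s" unfolding s_def using Y1[of m] by simp
  have key: "sqrt (Y k) \<ge> s * s" if "k < m" for k
  proof -
    have "Psi (Y k) \<le> sqrt (Y k)" using Psi_step_le[OF Y1[of k]] by simp
    moreover have "Y (Suc k) = Psi (Y k)" unfolding Y_def by simp
    moreover have "Y m \<le> Y (Suc k)" unfolding Y_def using Psi_iter_antimono[OF X, of "Suc k" m] that by simp
    ultimately show ?thesis using sY by simp
  qed
  have ss: "s * s \<ge> 1" using mult_mono[OF s1 s1] s1 by simp
  have ek: "0 \<le> e k \<and> e k \<le> 1/(s* s)" if "k < m" for k
  proof -
    have a: "s * s \<le> 1 + sqrt (Y k)" using key[OF that] by simp
    have "0 \<le> sqrt (Y k)" using Y1[of k] by simp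
    then have b: "0 < 1 + sqrt (Y k)" by (smt (verit))
    have "1 / (1 + sqrt (Y k)) \<le> 1 / (s* s)"
      using a ss b by (intro divide_left_mono) auto
    then show ?thesis unfolding e_def using b by simp
  qed
  have ek1: "0 \<le> e k \<and> e k \<le> 1" if "k < m" for k
  proof -
    have "1/(s* s) \<le> 1" using ss by simp
    then show ?thesis using ek[OF that] by linarith
  qed
  have W: "1 - (\<Sum>k<m. e k) \<le> P \<and> P \<le> 1 \<and> 0 \<le> P"
    unfolding P_def by (rule weier) (use ek1 in blast)
  have S: "(\<Sum>k<m. e k) \<le> real m * (1/(s* s))"
    using sum_bounded_above[of "{..<m}" e "1/(s* s)"] ek by auto
  have PM: "1 - P \<le> real m / (s* s)" using W S by simp
  have P: "0 \<le> P" "P \<le> 1" using W by auto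
  have FFeq: "2^(Suc m) * FF (Suc m) X = P * (1 - 1/(1+s))"
    using two_pow_FF[of X "Suc m"] X unfolding P_def e_def s_def Y_def by simp
  define E where "E = 2^(Suc m) * \<eta>"
  have Eeq: "E = 1 - P * (1 - 1/(1+s))"
    unfolding E_def \<eta>_def using FFeq by (simp add: right_diff_distrib)
  note A = alg[OF s1 P PM, unfolded Eeq[symmetric]]
  have E1: "E \<ge> 1/(2* s)" using A by simp
  have E2: "s * E \<ge> s/(1+s)" using A by simp
  have E3: "s * E \<le> 1 + real m / s" using A by simp
  have E4: "E \<le> (real m + 1) / s" using A by simp
  have Epos: "E > 0" using E1 s1 by (smt (verit) divide_pos_pos)
  then show "\<eta> > 0" unfolding E_def by (simp add: zero_less_mult_iff)
  then have \<eta>p: "\<eta> > 0" .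
  show "2^(Suc m) * \<eta> \<le> (real m + 1) / sqrt ((Psi^^m) X)"
    using E4 unfolding E_def s_def Y_def .
  have sp: "s > 0" using s1 by simp
  define p where "p = (2::real)^m"
  have pp: "p > 0" unfolding p_def by simp
  define T where "T = (\<Sum>k<m. 2^(k+1) * ln (1 + 1/sqrt (Y k)))"
  have tk: "0 \<le> 2^(k+1) * ln (1 + 1/sqrt (Y k)) \<and> 2^(k+1) * ln (1 + 1/sqrt (Y k)) \<le> p * (1/s)"
    if "k < m" for k
  proof -
    have yk: "sqrt (Y k) \<ge> 1" using Y1[of k] by simp
    have x0: "0 \<le> 1/sqrt (Y k)" using yk by simp
    have q1: "0 < s * s" using ss by simp
    have q2: "0 < sqrt (Y k)" using less_le_trans[OF q1 key[OF that]] .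
    have "1/sqrt (Y k) \<le> 1/(s * s)"
      by (rule divide_left_mono[OF key[OF that]]) (use mult_pos_pos[OF q2 q1] in auto)
    also have "\<dots> \<le> 1/s" using ss s1 by (intro divide_left_mono) (auto simp: mult_le_cancel_left1)
    finally have x1: "1/sqrt (Y k) \<le> 1/s" .
    have l0: "0 \<le> ln (1 + 1/sqrt (Y k))" using x0 by simp
    have l1: "ln (1 + 1/sqrt (Y k)) \<le> 1/s" using ln_add_one_self_le_self[OF x0] x1 by linarith
    have pw: "(2::real)^(k+1) \<le> p" unfolding p_def using that by (intro power_increasing) auto
    have "2^(k+1) * ln (1 + 1/sqrt (Y k)) \<le> p * (1/s)"
      using pw l1 l0 pp by (intro mult_mono) auto
    then show ?thesis using l0 by simp
  qed
  have T0: "0 \<le> T" unfolding T_def using tk by (intro sum_nonneg) auto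
  have T1: "T \<le> real m * p * (1/s)"
    using sum_bounded_above[of "{..<m}" "\<lambda>k. 2^(k+1) * ln (1 + 1/sqrt (Y k))" "p * (1/s)"] tk
    unfolding T_def by (auto simp: mult.assoc)
  have sE: "s * E > 0" using sp Epos by simp
  have lo: "ln (s * E) \<ge> - (1/s)"
  proof -
    have a: "s/(1+s) > 0" using sp by simp
    have "ln (s/(1+s)) \<le> ln (s * E)" using E2 a sE by simp
    moreover have "ln (s/(1+s)) = - ln (1 + 1/s)"
    proof -
      have "s/(1+s) = 1/(1 + 1/s)" using sp by (simp add: field_simps)
      moreover have "ln (1/(1 + 1/s)) = - ln (1 + 1/s)" using sp by (simp add: ln_div)
      ultimately show ?thesis by simp
    qed
    moreover have "ln (1 + 1/s) \<le> 1/s" using sp by (intro ln_add_one_self_le_self) simp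
    ultimately show ?thesis by linarith
  qed
  have hi: "ln (s * E) \<le> real m * (1/s)"
  proof -
    have "ln (s * E) \<le> ln (1 + real m / s)" using E3 sE by simp
    also have "\<dots> \<le> real m / s" using sp by (intro ln_add_one_self_le_self) simp
    finally show ?thesis by simp
  qed
  have Ab: "\<bar>ln (s * E)\<bar> \<le> (real m + 1) * (1/s)"
  proof -
    have z1: "0 \<le> 1/s" using sp by simp
    have z2: "0 \<le> real m * (1/s)" using sp by simp
    have e: "(real m + 1) * (1/s) = real m * (1/s) + 1/s" by (simp add: algebra_simps)
    have a1: "ln (s * E) \<le> real m * (1/s) + 1/s" using hi z1 by linarith
    have a2: "- ln (s * E) \<le> real m * (1/s) + 1/s" using lo z2 by linarith
    show ?thesis unfolding abs_le_iff e using a1 a2 by blast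
  qed
  have u: "1/s \<le> 4 * p * \<eta>"
  proof -
    have "1/(2 * s) * 2 = 1/s" by simp
    then have "1/s \<le> 2 * E" using E1 by linarith
    then show ?thesis unfolding E_def p_def by simp
  qed
  have lr: "p * ln (Y m) = ln X - (2 * p - 2) * ln 2 + T"
    using log_rec[OF X, of m] unfolding p_def T_def Y_def by simp
  have lnE: "ln (s * E) = ln (Y m) / 2 + (real m + 1) * ln 2 + ln \<eta>"
  proof -
    have "ln (s * E) = ln s + ln E" using sp Epos by (rule ln_mult_pos)
    moreover have "ln s = ln (Y m) / 2" unfolding s_def using Y1[of m] by (simp add: ln_sqrt)
    moreover have "ln E = ln (2^(Suc m)) + ln \<eta>" unfolding E_def using \<eta>p by (intro ln_mult_pos) auto
    moreover have "ln ((2::real)^(Suc m)) = (real m + 1) * ln 2"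
      using ln_realpow[of "2::real" "Suc m"] by simp
    ultimately show ?thesis by simp
  qed
  have pw: "2 powr (1 - real (Suc m)) = 1 / p"
  proof -
    have "1 - real (Suc m) = - real m" by simp
    then have "2 powr (1 - real (Suc m)) = inverse (2 powr real m)" by (simp add: powr_minus)
    also have "2 powr real m = p" unfolding p_def by (simp add: powr_realpow)
    finally show ?thesis by (simp add: divide_inverse)
  qed
  have lnL: "ln (2 powr (real (Suc m) - 1 + 2 powr (1 - real (Suc m))) * \<eta>)
        = (real m + 1/p) * ln 2 + ln \<eta>"
  proof -
    have "ln (2 powr (real (Suc m) - 1 + 2 powr (1 - real (Suc m))) * \<eta>)
        = ln (2 powr (real (Suc m) - 1 + 2 powr (1 - real (Suc m)))) + ln \<eta>"
      using \<eta>p by (intro ln_mult_pos) auto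
    then show ?thesis unfolding pw by simp
  qed
  have eq: "ln X + 2^(Suc m) * ln (2 powr (real (Suc m) - 1 + 2 powr (1 - real (Suc m))) * \<eta>)
      = 2 * p * ln (s * E) - T"
  proof -
    have "(2::real)^(Suc m) = 2 * p" unfolding p_def by simp
    moreover have "ln X = p * ln (Y m) + (2 * p - 2) * ln 2 - T" using lr by simp
    ultimately show ?thesis unfolding lnL lnE using ident[OF pp, of "ln X" "ln (Y m)" "ln 2" T "real m" "ln \<eta>"]
      by simp
  qed
  have fb: "\<bar>2 * p * ln (s * E) - T\<bar> \<le> 4 * (4 * (p * p)) * (real m + 1) * \<eta>"
    by (rule fin[OF Ab T0 T1 u _ pp _ \<eta>p]) (use sp in auto)
  have "(4::real)^(Suc m) = 4 * (p * p)" unfolding p_def by (simp add: power_mult_distrib[symmetric])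
  then show "\<bar>ln X + 2^(Suc m) * ln (2 powr (real (Suc m) - 1 + 2 powr (1 - real (Suc m))) * \<eta>)\<bar>
           \<le> 4 * 4^(Suc m) * real (Suc m) * \<eta>"
    unfolding eq using fb by (simp add: add.commute)
qed


lemma Psi_iter_large: "\<exists>M\<ge>1. \<forall>X\<ge>M. (Psi^^k) X \<ge> B"
proof (induction k arbitrary: B)
  case 0
  show ?case by (rule exI[of _ "max 1 B"]) auto
next
  case (Suc k)
  obtain M' where M': "M' \<ge> 1" "\<forall>Z\<ge>M'. (Psi^^k) Z \<ge> B" using Suc by blast
  show ?case
  proof (rule exI[of _ "4 * M'^2"], intro conjI allI impI)
    have "M'^2 \<ge> 1" using M' by simp
    then show "1 \<le> 4 * M'^2" by simp
    fix X assume X: "4 * M'^2 \<le> X"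
    have "(2 * M')^2 \<le> X" using X by (simp add: power_mult_distrib)
    then have "2 * M' \<le> sqrt X" by (rule real_le_rsqrt)
    then have "M' \<le> Psi X" unfolding Psi_def by simp
    then have "(Psi^^k) (Psi X) \<ge> B" using M' by blast
    then show "(Psi^^Suc k) X \<ge> B" by (simp only: funpow_Suc_right comp_apply)
  qed
qed

lemma part2:
  assumes r: "r \<ge> 1"
  shows "(\<lambda>\<eta>. xi_star r (1 / 2 ^ r - \<eta>)
            - (- (2 ^ r) * ln (2 powr (real r - 1 + 2 powr (1 - real r)) * \<eta>)))
           \<in> O[at_right (0::real)](\<lambda>\<eta>. \<eta>)"
proof -
  obtain m where m: "r = Suc m" using r by (cases r) auto
  have F1: "1/2^r - FF r 1 > 0" using part2_bound(1)[of 1 m] m by simp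
  show ?thesis
  proof (rule bigoI)
    show "\<forall>\<^sub>F \<eta> in at_right 0. norm (xi_star r (1 / 2 ^ r - \<eta>)
            - (- (2 ^ r) * ln (2 powr (real r - 1 + 2 powr (1 - real r)) * \<eta>)))
          \<le> (4 * 4^r * real r) * norm \<eta>"
      using eventually_at_right_real[OF F1]
    proof (rule eventually_mono)
      fix \<eta> :: real assume "\<eta> \<in> {0<..<1/2^r - FF r 1}"
      then have \<eta>: "0 < \<eta>" "\<eta> < 1/2^r - FF r 1" by auto
      define c where "c = (real m + 1) / (2^r * \<eta>)"
      have c0: "c > 0" unfolding c_def using \<eta> by simp
      obtain M where M: "M \<ge> 1" "\<forall>X\<ge>M. (Psi^^m) X \<ge> c^2" using Psi_iter_large by blast
      have "c^2 \<le> (Psi^^m) M" using M by simp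
      then have sc: "c \<le> sqrt ((Psi^^m) M)" by (rule real_le_rsqrt)
      have b2: "2^r * (1/2^r - FF r M) \<le> (real m + 1) / sqrt ((Psi^^m) M)"
        using part2_bound(2)[OF M(1), of m] m by simp
      also have "\<dots> \<le> (real m + 1) / c"
        by (rule divide_left_mono[OF sc]) (use mult_pos_pos[OF less_le_trans[OF c0 sc] c0] in auto)
      also have "\<dots> = 2^r * \<eta>" unfolding c_def using \<eta> by simp
      finally have "1/2^r - FF r M \<le> \<eta>" by simp
      then have up: "1/2^r - \<eta> \<le> FF r M" by simp
      have cont: "continuous_on {1..M} (FF r)"
        by (rule continuous_on_subset[OF FF_cont]) auto
      have "\<exists>x\<ge>1. x \<le> M \<and> FF r x = 1/2^r - \<eta>"
      proof (rule IVT'[OF _ up M(1) cont])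
        show "FF r 1 \<le> 1/2^r - \<eta>" using \<eta> by simp
      qed
      then obtain X where X: "1 \<le> X" "X \<le> M" "FF r X = 1/2^r - \<eta>" by blast
      have Xp: "X > 0" using X by simp
      have xi: "xi_star r (1/2^r - \<eta>) = ln X" using xi_star_eq[OF r Xp] X by simp
      have e: "\<eta> = 1/2^(Suc m) - FF (Suc m) X" using X m by simp
      have b: "\<bar>ln X + 2^(Suc m) * ln (2 powr (real (Suc m) - 1 + 2 powr (1 - real (Suc m))) * \<eta>)\<bar>
           \<le> 4 * 4^(Suc m) * real (Suc m) * \<eta>"
        using part2_bound(3)[OF X(1), of m] unfolding e[symmetric] .
      show "norm (xi_star r (1 / 2 ^ r - \<eta>)
            - (- (2 ^ r) * ln (2 powr (real r - 1 + 2 powr (1 - real r)) * \<eta>)))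
          \<le> (4 * 4^r * real r) * norm \<eta>"
        unfolding xi using b \<eta> m by simp
    qed
  qed
qed

theorem theorem4p4:
  fixes r :: nat
  assumes "r \<ge> 1"
  shows "(\<lambda>\<eta>. xi_star r \<eta>
            - 2 * ln (4 ^ r * \<eta> * sqrt ((Psi ^^ r) 0 * (\<Prod>k\<in>{1..r}. (Psi ^^ k) 0))))
           \<in> O[at_right (0::real)](\<lambda>\<eta>. \<eta>)
       \<and> (\<lambda>\<eta>. xi_star r (1 / 2 ^ r - \<eta>)
            - (- (2 ^ r) * ln (2 powr (real r - 1 + 2 powr (1 - real r)) * \<eta>)))
           \<in> O[at_right (0::real)](\<lambda>\<eta>. \<eta>)"
  using part1[OF assms] part2[OF assms] by blast

end
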